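(* Let $k$ be a symmetric positive semidefinite kernel on $\mathbb{R}^d$, $\sigma_n^2>0$, and let $\mathbb{D}_N^x=\{\bm{x}^{(i)}\}_{i=1}^N$ with $N\ge1$ be an input training data set with GP posterior variance $\sigma_N^2(\cdot)$. Then for every $\bm{x}\in\mathbb{R}^d$, $$\sigma_N^2(\bm{x})\le k(\bm{x},\bm{x})-\frac{N\min_{\bm{x}'\in\mathbb{D}_N^x}k(\bm{x}',\bm{x})^2}{N\max_{\bm{x}',\bm{x}''\in\mathbb{D}_N^x}k(\bm{x}',\bm{x}'')+\sigma_n^2}.$$
   Context: Gaussian process posterior variance: with $K_{N,ij}=k(\bm{x}^{(i)},\bm{x}^{(j)})$, $k_{N,i}(\bm{x})=k(\bm{x},\bm{x}^{(i)})$, $\bm{A}_N=\bm{K}_N+\sigma_n^2\bm{I}_N$, $\sigma_N^2(\bm{x})=k(\bm{x},\bm{x})-\bm{k}_N(\bm{x})^T\bm{A}_N^{-1}\bm{k}_N(\bm{x})$. The max and min range over training inputs (pairs may coincide). *)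

theory Defs
  imports "HOL-Analysis.Analysis"
begin

definition psd_kernel :: "('a \<Rightarrow> 'a \<Rightarrow> real) \<Rightarrow> bool" where
  "psd_kernel k \<longleftrightarrow>
     (\<forall>x y. k x y = k y x) \<and>
     (\<forall>(n::nat) (p::nat \<Rightarrow> 'a) (c::nat \<Rightarrow> real).
        0 \<le> (\<Sum>i<n. \<Sum>j<n. c i * c j * k (p i) (p j)))"

(* Gram matrix K_N of the training inputs X (indexed by the finite type 'n, N = CARD('n)) *)
definition gram_matrix :: "('a \<Rightarrow> 'a \<Rightarrow> real) \<Rightarrow> ('n::finite \<Rightarrow> 'a) \<Rightarrow> real^'n^'n" where
  "gram_matrix k X = (\<chi> i j. k (X i) (X j))"

definition kernel_vec :: "('a \<Rightarrow> 'a \<Rightarrow> real) \<Rightarrow> ('n::finite \<Rightarrow> 'a) \<Rightarrow> 'a \<Rightarrow> real^'n" where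
  "kernel_vec k X x = (\<chi> i. k x (X i))"

definition gp_post_var :: "('a \<Rightarrow> 'a \<Rightarrow> real) \<Rightarrow> real \<Rightarrow> ('n::finite \<Rightarrow> 'a) \<Rightarrow> 'a \<Rightarrow> real" where
  "gp_post_var k s2 X x =
     k x x - kernel_vec k X x \<bullet> (matrix_inv (gram_matrix k X + s2 *\<^sub>R mat 1) *v kernel_vec k X x)"

end

theory Submission
  imports Defs
begin

lemma psd_sum:
  fixes X :: "'n::finite \<Rightarrow> 'a"
  assumes "psd_kernel k"
  shows "0 \<le> (\<Sum>i\<in>UNIV. \<Sum>j\<in>UNIV. c i * c j * k (X i) (X j))"
proof -
  obtain h where h: "bij_betw h {0..<card (UNIV::'n set)} (UNIV::'n set)"
    using ex_bij_betw_nat_finite[of "UNIV::'n set"] by auto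
  have H: "\<And>n p (c::nat\<Rightarrow>real). 0 \<le> (\<Sum>i<n. \<Sum>j<n. c i * c j * k (p i) (p j))"
    using assms unfolding psd_kernel_def by blast
  have "0 \<le> (\<Sum>i<CARD('n). \<Sum>j<CARD('n). c (h i) * c (h j) * k (X (h i)) (X (h j)))"
    using H[where n="CARD('n)" and p="\<lambda>i. X (h i)" and c="\<lambda>i. c (h i)"] by simp
  also have "\<dots> = (\<Sum>i\<in>UNIV. \<Sum>j\<in>UNIV. c i * c j * k (X i) (X j))"
  proof -
    have "(\<Sum>i<CARD('n). \<Sum>j<CARD('n). c (h i) * c (h j) * k (X (h i)) (X (h j)))
        = (\<Sum>i<CARD('n). \<Sum>j\<in>UNIV. c (h i) * c j * k (X (h i)) (X j))"
      using sum.reindex_bij_betw[OF h, of "\<lambda>j. c (h i) * c j * k (X (h i)) (X j)" for i]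
      by (simp add: lessThan_atLeast0)
    also have "\<dots> = (\<Sum>i\<in>UNIV. \<Sum>j\<in>UNIV. c i * c j * k (X i) (X j))"
      using sum.reindex_bij_betw[OF h, of "\<lambda>i. \<Sum>j\<in>UNIV. c i * c j * k (X i) (X j)"]
      by (simp add: lessThan_atLeast0)
    finally show ?thesis .
  qed
  finally show ?thesis .
qed

lemma diag_nonneg:
  assumes "psd_kernel k" shows "0 \<le> k a a"
proof -
  have H: "\<And>n p (c::nat\<Rightarrow>real). 0 \<le> (\<Sum>i<n. \<Sum>j<n. c i * c j * k (p i) (p j))"
    using assms unfolding psd_kernel_def by blast
  show ?thesis using H[where n=1 and p="\<lambda>_. a" and c="\<lambda>_. 1"] by simp
qed

lemma off_bound:
  assumes "psd_kernel k" shows "\<bar>k a b\<bar> \<le> (k a a + k b b) / 2"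
proof -
  have sym: "k b a = k a b" using assms unfolding psd_kernel_def by auto
  have H: "\<And>n p (c::nat\<Rightarrow>real). 0 \<le> (\<Sum>i<n. \<Sum>j<n. c i * c j * k (p i) (p j))"
    using assms unfolding psd_kernel_def by blast
  have "0 \<le> (\<Sum>i<2::nat. \<Sum>j<2::nat. (\<lambda>i. if i = 0 then 1 else s) i * (\<lambda>i. if i = 0 then 1 else s) j
        * k ((\<lambda>i. if i = 0 then a else b) i) ((\<lambda>i. if i = 0 then a else b) j))" for s :: real
    by (rule H)
  then have h0: "0 \<le> 2 * (s * k a b) + (k a a + s * s * k b b)" for s
    by (simp add: numeral_2_eq_2 sym)
  have h: "0 \<le> k a a + 2 * s * k a b + s * s * k b b" for s
    using h0[of s] by (simp add: algebra_simps)
  from h[of 1] h[of "-1"] show ?thesis by (simp add: abs_if)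
qed

lemma off_bound2:
  assumes "psd_kernel k" "k a a \<le> M" "k b b \<le> M" shows "\<bar>k a b\<bar> \<le> M"
proof -
  have "k a a + k b b \<le> 2 * M" using assms(2,3) by linarith
  then have "(k a a + k b b) / 2 \<le> M" by (simp add: field_simps)
  then show ?thesis using off_bound[OF assms(1), of a b] by linarith
qed

lemma bilin:
  fixes X :: "'n::finite \<Rightarrow> 'a"
  shows "u \<bullet> ((gram_matrix k X + s2 *\<^sub>R mat 1) *v w)
     = (\<Sum>i\<in>UNIV. \<Sum>j\<in>UNIV. u$i * w$j * k (X i) (X j)) + s2 * (\<Sum>i\<in>UNIV. u$i * w$i)"
proof -
  have c: "((gram_matrix k X + s2 *\<^sub>R mat 1) *v w) $ i = (\<Sum>j\<in>UNIV. w$j * k (X i) (X j)) + s2 * w$i" for i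
  proof -
    have "((gram_matrix k X + s2 *\<^sub>R mat 1) *v w) $ i = (\<Sum>j\<in>UNIV. (k (X i) (X j) + s2 * (if i = j then 1 else 0)) * w$j)"
      by (simp add: matrix_vector_mult_def gram_matrix_def mat_def)
    also have "\<dots> = (\<Sum>j\<in>UNIV. w$j * k (X i) (X j) + (if i = j then s2 * w$j else 0))"
      by (rule sum.cong) (auto simp: algebra_simps)
    also have "\<dots> = (\<Sum>j\<in>UNIV. w$j * k (X i) (X j)) + (\<Sum>j\<in>UNIV. (if i = j then s2 * w$j else 0))"
      by (rule sum.distrib)
    also have "\<dots> = (\<Sum>j\<in>UNIV. w$j * k (X i) (X j)) + s2 * w$i"
      by simp
    finally show ?thesis .
  qed
  show ?thesis
    by (simp only: inner_vec_def c) (simp add: sum_distrib_left sum.distrib algebra_simps)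
qed

lemma quad_nonneg:
  fixes X :: "'n::finite \<Rightarrow> 'a"
  assumes "psd_kernel k" "0 < s2"
  shows "0 \<le> y \<bullet> ((gram_matrix k X + s2 *\<^sub>R mat 1) *v y)"
proof -
  have "0 \<le> (\<Sum>i\<in>UNIV. \<Sum>j\<in>UNIV. y$i * y$j * k (X i) (X j))"
    using psd_sum[OF assms(1), of "\<lambda>i. y$i" X] by simp
  moreover have "0 \<le> s2 * (\<Sum>i\<in>UNIV. y$i * y$i)"
    using assms(2) by (simp add: sum_nonneg)
  ultimately show ?thesis by (simp add: bilin)
qed

lemma quad_pos:
  fixes X :: "'n::finite \<Rightarrow> 'a"
  assumes "psd_kernel k" "0 < s2" "y \<noteq> 0"
  shows "0 < y \<bullet> ((gram_matrix k X + s2 *\<^sub>R mat 1) *v y)"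
proof -
  have "0 \<le> (\<Sum>i\<in>UNIV. \<Sum>j\<in>UNIV. y$i * y$j * k (X i) (X j))"
    using psd_sum[OF assms(1), of "\<lambda>i. y$i" X] by simp
  moreover have "(\<Sum>i\<in>UNIV. y$i * y$i) = y \<bullet> y" by (simp add: inner_vec_def)
  moreover have "0 < s2 * (y \<bullet> y)" using assms by simp
  ultimately show ?thesis by (simp add: bilin)
qed

lemma sym_form:
  fixes X :: "'n::finite \<Rightarrow> 'a"
  assumes "psd_kernel k"
  shows "u \<bullet> ((gram_matrix k X + s2 *\<^sub>R mat 1) *v w) = w \<bullet> ((gram_matrix k X + s2 *\<^sub>R mat 1) *v u)"
proof -
  have sym: "\<And>a b. k a b = k b a" using assms unfolding psd_kernel_def by auto
  have "(\<Sum>i\<in>UNIV. \<Sum>j\<in>UNIV. u$i * w$j * k (X i) (X j)) = (\<Sum>j\<in>UNIV. \<Sum>i\<in>UNIV. u$i * w$j * k (X i) (X j))"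
    by (rule sum.swap)
  also have "\<dots> = (\<Sum>i\<in>UNIV. \<Sum>j\<in>UNIV. w$i * u$j * k (X i) (X j))"
    by (simp add: sym mult.commute mult.left_commute)
  finally show ?thesis by (simp add: bilin mult.commute)
qed

theorem mainTheorem9:
  fixes k :: "real^'d \<Rightarrow> real^'d \<Rightarrow> real"
    and s2 :: real
    and X :: "'n::finite \<Rightarrow> real^'d"
    and x :: "real^'d"
  assumes "psd_kernel k"
    and "s2 > 0"
  shows "gp_post_var k s2 X x \<le>
    k x x - (real CARD('n) * Min {(k (X i) x)^2 | i. True})
            / (real CARD('n) * Max {k (X i) (X j) | i j. True} + s2)"
proof -
  define N where "N = real CARD('n)"
  define M where "M = Max {k (X i) (X j) | i j. True}"
  define m where "m = Min {(k (X i) x)^2 | i. True}"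
  define A where "A = gram_matrix k X + s2 *\<^sub>R mat 1"
  define v where "v = kernel_vec k X x"
  define w where "w = matrix_inv A *v v"
  have sym: "\<And>a b. k a b = k b a" using assms(1) unfolding psd_kernel_def by auto
  have Npos: "N > 0" unfolding N_def by simp
  have fM: "finite {k (X i) (X j) | i j. True}"
  proof -
    have "{k (X i) (X j) | i j. True} = (\<lambda>(i,j). k (X i) (X j)) ` UNIV" by auto
    then show ?thesis by simp
  qed
  have fm: "finite {(k (X i) x)^2 | i. True}"
  proof -
    have "{(k (X i) x)^2 | i. True} = (\<lambda>i. (k (X i) x)^2) ` UNIV" by auto
    then show ?thesis by simp
  qed
  have hM: "k (X i) (X j) \<le> M" for i j unfolding M_def using fM by (intro Max_ge) auto
  have habs: "\<bar>k (X i) (X j)\<bar> \<le> M" for i j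
    using off_bound2[OF assms(1) hM[of i i] hM[of j j]] .
  have M0: "0 \<le> M" using diag_nonneg[OF assms(1), of "X undefined"] hM by (meson order_trans)
  have hm: "m \<le> (k (X i) x)^2" for i unfolding m_def using fm by (intro Min_le) auto
  have m0: "0 \<le> m"
  proof -
    have "m \<in> {(k (X i) x)^2 | i. True}" unfolding m_def using fm by (intro Min_in) auto
    then show ?thesis by auto
  qed
  have vi: "v$i = k (X i) x" for i unfolding v_def kernel_vec_def by (simp add: sym)
  have ker: "\<forall>y. A *v y = 0 \<longrightarrow> y = 0"
  proof (intro allI impI)
    fix y assume "A *v y = 0"
    then have "y \<bullet> (A *v y) = 0" by simp
    then show "y = 0" using quad_pos[OF assms, of y X] unfolding A_def by fastforce
  qed
  then have "invertible A" using matrix_left_invertible_ker invertible_left_inverse by blast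
  then have "A ** matrix_inv A = mat 1"
    unfolding invertible_def matrix_inv_def by (rule someI_ex[where P="\<lambda>A'. A ** A' = mat 1 \<and> A' ** A = mat 1", THEN conjunct1])
  then have Aw: "A *v w = v" unfolding w_def by (simp add: matrix_vector_mul_assoc)
  define u :: "real^'n" where "u = (\<chi> i. sgn (v$i))"
  define S where "S = (\<Sum>i\<in>UNIV. \<bar>v$i\<bar>)"
  define D where "D = N * N * M + s2 * N"
  have Dpos: "D > 0" unfolding D_def using Npos M0 assms(2) by (simp add: add_nonneg_pos)
  have uv: "u \<bullet> v = S" unfolding u_def S_def inner_vec_def by (simp add: abs_sgn mult.commute)
  have uAu: "u \<bullet> (A *v u) \<le> D"
  proof -
    have "(\<Sum>i\<in>UNIV. \<Sum>j\<in>UNIV. u$i * u$j * k (X i) (X j)) \<le> (\<Sum>i\<in>(UNIV::'n set). \<Sum>j\<in>(UNIV::'n set). M)"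
    proof (intro sum_mono)
      fix i j
      have "u$i * u$j * k (X i) (X j) \<le> \<bar>u$i * u$j * k (X i) (X j)\<bar>" by simp
      also have "\<dots> = \<bar>u$i\<bar> * \<bar>u$j\<bar> * \<bar>k (X i) (X j)\<bar>" by (simp add: abs_mult)
      also have "\<dots> \<le> 1 * 1 * M"
        using habs[of i j] unfolding u_def
        by (intro mult_mono) (auto simp: abs_sgn_eq)
      finally show "u$i * u$j * k (X i) (X j) \<le> M" by simp
    qed
    also have "\<dots> = N * N * M" unfolding N_def by simp
    finally have 1: "(\<Sum>i\<in>UNIV. \<Sum>j\<in>UNIV. u$i * u$j * k (X i) (X j)) \<le> N * N * M" .
    have "(\<Sum>i\<in>UNIV. u$i * u$i) \<le> (\<Sum>i\<in>(UNIV::'n set). 1)"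
      unfolding u_def by (intro sum_mono) (auto simp: sgn_if)
    then have "(\<Sum>i\<in>UNIV. u$i * u$i) \<le> N" unfolding N_def by simp
    then have 2: "s2 * (\<Sum>i\<in>UNIV. u$i * u$i) \<le> s2 * N" using assms(2) by simp
    show ?thesis using 1 2 unfolding A_def D_def by (simp add: bilin)
  qed
  have key: "2 * c * S - c * c * (u \<bullet> (A *v u)) \<le> v \<bullet> w" for c
  proof -
    have "0 \<le> (w - c *\<^sub>R u) \<bullet> (A *v (w - c *\<^sub>R u))"
      unfolding A_def by (rule quad_nonneg[OF assms])
    also have "\<dots> = w \<bullet> (A *v w) - c * (w \<bullet> (A *v u)) - c * (u \<bullet> (A *v w)) + c * c * (u \<bullet> (A *v u))"
      by (simp add: matrix_vector_mult_diff_distrib matrix_vector_mult_scaleR inner_diff_left inner_diff_right algebra_simps)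
    also have "w \<bullet> (A *v u) = u \<bullet> (A *v w)" unfolding A_def by (rule sym_form[OF assms(1), symmetric])
    finally show ?thesis using Aw uv by (simp add: inner_commute algebra_simps)
  qed
  have "2 * (S / D) * S - (S / D) * (S / D) * D \<le> v \<bullet> w"
  proof -
    have "(S / D) * (S / D) * (u \<bullet> (A *v u)) \<le> (S / D) * (S / D) * D"
      using uAu by (intro mult_left_mono) auto
    then show ?thesis using key[of "S / D"] by linarith
  qed
  then have SD: "S * S / D \<le> v \<bullet> w" using Dpos by (simp add: field_simps power2_eq_square)
  have "N * sqrt m \<le> S"
  proof -
    have "sqrt m \<le> \<bar>v$i\<bar>" for i
      using real_sqrt_le_mono[OF hm[of i]] by (simp add: vi)
    then have "(\<Sum>i\<in>(UNIV::'n set). sqrt m) \<le> S" unfolding S_def by (intro sum_mono) auto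
    then show ?thesis unfolding N_def by simp
  qed
  moreover have "0 \<le> N * sqrt m" using m0 Npos by simp
  ultimately have "(N * sqrt m) * (N * sqrt m) \<le> S * S"
    by (intro mult_mono) auto
  then have "N * N * m \<le> S * S" using m0 by (simp add: algebra_simps)
  then have "N * N * m / D \<le> S * S / D" using Dpos by (simp add: divide_right_mono)
  also have "N * N * m / D = N * m / (N * M + s2)"
  proof -
    have p: "N * M + s2 > 0" using Npos M0 assms(2) by (simp add: add_nonneg_pos)
    have "D = N * (N * M + s2)" unfolding D_def by (simp add: algebra_simps)
    moreover have "N * (N * m) / (N * (N * M + s2)) = N * m / (N * M + s2)"
      using Npos by (intro mult_divide_mult_cancel_left) simp
    ultimately show ?thesis by (simp add: mult.assoc)
  qed
  finally have "N * m / (N * M + s2) \<le> v \<bullet> w" using SD by linarith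
  then show ?thesis
    unfolding gp_post_var_def N_def M_def m_def A_def v_def w_def
    by (simp add: A_def v_def)
qed

end
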